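(* Let $\mathbf k$ be a field, $V$ a finite-dimensional $\mathbf k$-vector space with a nondegenerate quadratic form $Q$, and let $N\in\tilde{\mathcal M}_Q$, $N\ne0$. Let $e\ge2$ be the smallest integer with $N^e=0$, and let $E$ be a complement to $\ker N^{e-1}$ in $V$. Then the linear map $E^{\oplus e}\to V$, $(v_0,v_1,\dots,v_{e-1})\mapsto v_0+Nv_1+\cdots+N^{e-1}v_{e-1}$, is injective, and the restriction of $\langle,\rangle$ to its image $W=E+NE+\cdots+N^{e-1}E$ has zero radical.
   Context: $\langle x,y\rangle=Q(x+y)-Q(x)-Q(y)$, with radical $R=\{x:\langle x,V\rangle=0\}$; $Q$ is nondegenerate if $Q|_R$ is injective. $\tilde{\mathcal M}_Q$ is the set of nilpotent $N\in\mathrm{End}(V)$ with $Q(Nx)=-\langle x,Nx\rangle$ for all $x\in V$. *)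

theory Defs
  imports Complex_Main
begin

definition polar :: "('v::ab_group_add \<Rightarrow> 'k::field) \<Rightarrow> 'v \<Rightarrow> 'v \<Rightarrow> 'k" where
  "polar Q x y = Q (x + y) - Q x - Q y"

definition quadratic_form :: "('k::field \<Rightarrow> 'v::ab_group_add \<Rightarrow> 'v) \<Rightarrow> ('v \<Rightarrow> 'k) \<Rightarrow> bool" where
  "quadratic_form scale Q \<longleftrightarrow>
     (\<forall>a x. Q (scale a x) = a^2 * Q x) \<and>
     (\<forall>y. Vector_Spaces.linear scale (*) (\<lambda>x. polar Q x y))"

definition radical :: "('v::ab_group_add \<Rightarrow> 'k::field) \<Rightarrow> 'v set" where
  "radical Q = {x. \<forall>y. polar Q x y = 0}"

definition nondegenerate :: "('v::ab_group_add \<Rightarrow> 'k::field) \<Rightarrow> bool" where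
  "nondegenerate Q \<longleftrightarrow> inj_on Q (radical Q)"

definition MQ :: "('k::field \<Rightarrow> 'v::ab_group_add \<Rightarrow> 'v) \<Rightarrow> ('v \<Rightarrow> 'k) \<Rightarrow> ('v \<Rightarrow> 'v) set" where
  "MQ scale Q = {N. Vector_Spaces.linear scale scale N \<and> (\<exists>n. N ^^ n = (\<lambda>_. 0)) \<and>
                    (\<forall>x. Q (N x) = - polar Q x (N x))}"

end

theory Submission
  imports Defs
begin

locale nilq =
  fixes Q :: "'v::ab_group_add \<Rightarrow> 'k::field" and N :: "'v \<Rightarrow> 'v" and e :: nat and E :: "'v set"
  assumes addP: "\<And>x y z. polar Q (x + y) z = polar Q x z + polar Q y z"
    and addN: "\<And>x y. N (x + y) = N x + N y"
    and Ne: "N ^^ e = (\<lambda>_. 0)"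
    and e2: "2 \<le> e"
    and Nq: "\<And>x. Q (N x) = - polar Q x (N x)"
    and nd: "nondegenerate Q"
    and E0: "0 \<in> E"
    and Ediff: "\<And>x y. x \<in> E \<Longrightarrow> y \<in> E \<Longrightarrow> x - y \<in> E"
    and E_int: "E \<inter> {x. (N ^^ (e - 1)) x = 0} = {0}"
    and E_sum: "\<forall>x. \<exists>u\<in>E. \<exists>k. (N ^^ (e - 1)) k = 0 \<and> x = u + k"
begin

abbreviation P where "P \<equiv> polar Q"

lemma P0l[simp]: "P 0 y = 0"
  using addP[of 0 0 y] by (metis add.right_neutral add_left_cancel add_0)

lemma Q0[simp]: "Q 0 = 0"
  using P0l[of 0] unfolding polar_def by simp

lemma Psym: "P x y = P y x"
  unfolding polar_def by (simp add: add.commute)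

lemma addPr: "P z (x + y) = P z x + P z y"
  using addP[of x y z] by (simp add: Psym)

lemma P0r[simp]: "P y 0 = 0"
  using P0l Psym by metis

lemma Psum: "P (\<Sum>i\<in>S. f i) y = (\<Sum>i\<in>S. P (f i) y)"
  by (induct S rule: infinite_finite_induct) (auto simp: addP)

lemma N0[simp]: "N 0 = 0"
  using addN[of 0 0] by simp

lemma pw_add: "(N ^^ n) (x + y) = (N ^^ n) x + (N ^^ n) y"
  by (induct n) (auto simp: addN)

lemma pw_0[simp]: "(N ^^ n) 0 = 0"
  by (induct n) auto

lemma pw_neg: "(N ^^ n) (- x) = - (N ^^ n) x"
  using pw_add[of n "-x" x] by (simp add: eq_neg_iff_add_eq_0)

lemma pw_diff: "(N ^^ n) (x - y) = (N ^^ n) x - (N ^^ n) y"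
  using pw_add[of n x "-y"] pw_neg by simp

lemma pw_sum: "(N ^^ n) (\<Sum>i\<in>S. f i) = (\<Sum>i\<in>S. (N ^^ n) (f i))"
  by (induct S rule: infinite_finite_induct) (auto simp: pw_add)

lemma pw_comp: "(N ^^ a) ((N ^^ b) x) = (N ^^ (a + b)) x"
  by (simp add: funpow_add)

lemma pw_big: "e \<le> m \<Longrightarrow> (N ^^ m) x = 0"
proof -
  assume "e \<le> m"
  then obtain d where "m = d + e" by (metis le_add_diff_inverse2)
  then show ?thesis using pw_comp[of d e x, symmetric] Ne by simp
qed

lemma Qiso: "Q (x + N x) = Q x"
  using Nq[of x] unfolding polar_def by (simp add: algebra_simps)

lemma iso: "P (N x) y + P x (N y) + P (N x) (N y) = 0"
proof -
  have "P (x + N x) (y + N y) = P x y"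
    unfolding polar_def
    using Qiso[of "x+y"] Qiso[of x] Qiso[of y] addN[of x y]
    by (simp add: algebra_simps)
  moreover have "P (x + N x) (y + N y) = P x y + P x (N y) + P (N x) y + P (N x) (N y)"
    by (simp add: addP addPr algebra_simps)
  ultimately show ?thesis by (simp add: algebra_simps)
qed

lemma vanish: "e \<le> a + b \<Longrightarrow> P ((N ^^ a) x) ((N ^^ b) y) = 0"
proof (induct a arbitrary: b)
  case 0
  then show ?case using pw_big[of b y] by simp
next
  case (Suc a)
  note IH = Suc.hyps
  have "\<forall>b. e - b = d \<longrightarrow> e \<le> Suc a + b \<longrightarrow> P ((N ^^ Suc a) x) ((N ^^ b) y) = 0" for d
  proof (induct d)
    case 0
    then show ?case using pw_big by auto
  next
    case (Suc d)
    show ?case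
    proof (intro allI impI)
      fix b assume h: "e - b = Suc d" "e \<le> Suc a + b"
      have i: "P ((N ^^ Suc a) x) ((N ^^ b) y) + P ((N ^^ a) x) ((N ^^ Suc b) y)
          + P ((N ^^ Suc a) x) ((N ^^ Suc b) y) = 0"
        using iso[of "(N ^^ a) x" "(N ^^ b) y"] by simp
      have "P ((N ^^ a) x) ((N ^^ Suc b) y) = 0" using IH[of "Suc b"] h by simp
      moreover have "P ((N ^^ Suc a) x) ((N ^^ Suc b) y) = 0"
        using Suc.hyps h by (simp del: funpow.simps)
      ultimately show "P ((N ^^ Suc a) x) ((N ^^ b) y) = 0" using i by simp
    qed
  qed
  then show ?case using Suc.prems by blast
qed

lemma shift: "a + b = e - 1 \<Longrightarrow> P ((N ^^ a) x) ((N ^^ b) y) = (-1) ^ a * P x ((N ^^ (a + b)) y)"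
proof (induct a arbitrary: b)
  case 0
  then show ?case by simp
next
  case (Suc a)
  have i: "P ((N ^^ Suc a) x) ((N ^^ b) y) + P ((N ^^ a) x) ((N ^^ Suc b) y)
      + P ((N ^^ Suc a) x) ((N ^^ Suc b) y) = 0"
    using iso[of "(N ^^ a) x" "(N ^^ b) y"] by simp
  have "P ((N ^^ Suc a) x) ((N ^^ Suc b) y) = 0"
    using vanish[of "Suc a" "Suc b"] Suc.prems e2 by simp
  moreover have "P ((N ^^ a) x) ((N ^^ Suc b) y) = (-1) ^ a * P x ((N ^^ (e - 1)) y)"
    using Suc.hyps[of "Suc b"] Suc.prems by (metis add_Suc_right add_Suc)
  ultimately have "P ((N ^^ Suc a) x) ((N ^^ b) y) = - ((-1) ^ a * P x ((N ^^ (e - 1)) y))"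
    using i by (simp add: eq_neg_iff_add_eq_0 del: funpow.simps)
  then show ?case unfolding Suc.prems by simp
qed

lemma key:
  assumes x: "x \<in> E" and h: "\<forall>y\<in>E. P x ((N ^^ (e - 1)) y) = 0"
  shows "x = 0"
proof -
  let ?z = "(N ^^ (e - 1)) x"
  have a: "P ?z y = 0" if "y \<in> E" for y
    using shift[of "e-1" 0 x y] h that by simp
  have b: "P ?z k = 0" if "(N ^^ (e - 1)) k = 0" for k
    using shift[of "e-1" 0 x k] that by simp
  have rad: "?z \<in> radical Q"
    unfolding radical_def
  proof (safe)
    fix y
    obtain u k where "u \<in> E" "(N ^^ (e - 1)) k = 0" "y = u + k" using E_sum by blast
    then show "P ?z y = 0" using a b addPr by simp
  qed
  have ee: "e - 1 = Suc (e - 2)" using e2 by simp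
  have "Q ?z = Q (N ((N ^^ (e - 2)) x))" using ee by simp
  also have "\<dots> = - P ((N ^^ (e - 2)) x) ?z" using Nq ee by simp
  also have "\<dots> = - P ?z ((N ^^ (e - 2)) x)" by (simp only: Psym[of "(N ^^ (e - 2)) x"])
  also have "\<dots> = 0" using rad unfolding radical_def by simp
  finally have "Q ?z = Q 0" by simp
  moreover have "0 \<in> radical Q" unfolding radical_def by simp
  ultimately have "?z = 0" using nd rad unfolding nondegenerate_def inj_on_def by blast
  then show ?thesis using E_int x by blast
qed

lemma inj_core:
  assumes d: "\<forall>i<e. d i \<in> E" and s: "(\<Sum>i<e. (N ^^ i) (d i)) = 0"
  shows "\<forall>i<e. d i = 0"
proof -
  have "k < e \<longrightarrow> d k = 0" for k
  proof (induct k rule: less_induct)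
    case (less k)
    show ?case
    proof
      assume k: "k < e"
      have "0 = (N ^^ (e - 1 - k)) (\<Sum>i<e. (N ^^ i) (d i))" using s by simp
      also have "\<dots> = (\<Sum>i<e. (N ^^ (e - 1 - k + i)) (d i))" by (simp add: pw_sum pw_comp)
      also have "\<dots> = (\<Sum>i<e. if i = k then (N ^^ (e - 1)) (d k) else 0)"
      proof (rule sum.cong)
        fix i assume "i \<in> {..<e}"
        then show "(N ^^ (e - 1 - k + i)) (d i) = (if i = k then (N ^^ (e - 1)) (d k) else 0)"
        proof (cases "i < k")
          case True then show ?thesis using less.hyps[of i] k by simp
        next
          case False
          show ?thesis
          proof (cases "i = k")
            case True then show ?thesis using k by simp
          next
            case False
            then have "e \<le> e - 1 - k + i" using \<open>\<not> i < k\<close> k by linarith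
            then show ?thesis using pw_big False by simp
          qed
        qed
      qed simp
      also have "\<dots> = (N ^^ (e - 1)) (d k)" using k by simp
      finally have "(N ^^ (e - 1)) (d k) = 0" by simp
      then have "d k \<in> E \<inter> {x. (N ^^ (e - 1)) x = 0}" using d k by simp
      then show "d k = 0" unfolding E_int by simp
    qed
  qed
  then show ?thesis by blast
qed

lemma rad_core:
  assumes v: "\<forall>i<e. v i \<in> E"
    and h: "\<forall>w'\<in>{\<Sum>i<e. (N ^^ i) (u i) | u. \<forall>i<e. u i \<in> E}. P (\<Sum>i<e. (N ^^ i) (v i)) w' = 0"
  shows "\<forall>i<e. v i = 0"
proof -
  have "k < e \<longrightarrow> v k = 0" for k
  proof (induct k rule: less_induct)
    case (less k)
    show ?case
    proof
      assume k: "k < e"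
      have hk: "P (v k) ((N ^^ (e - 1)) y) = 0" if y: "y \<in> E" for y
      proof -
        let ?u = "\<lambda>i. if i = e - 1 - k then y else 0"
        have "(\<Sum>i<e. (N ^^ i) (?u i)) = (\<Sum>i<e. if i = e - 1 - k then (N ^^ (e - 1 - k)) y else 0)"
          by (rule sum.cong) auto
        also have "\<dots> = (N ^^ (e - 1 - k)) y" using k by simp
        finally have c: "(\<Sum>i<e. (N ^^ i) (?u i)) = (N ^^ (e - 1 - k)) y" .
        have "\<exists>u. (N ^^ (e - 1 - k)) y = (\<Sum>i<e. (N ^^ i) (u i)) \<and> (\<forall>i<e. u i \<in> E)"
          by (rule exI[of _ ?u]) (use c y E0 in auto)
        then have "(N ^^ (e - 1 - k)) y \<in> {\<Sum>i<e. (N ^^ i) (u i) | u. \<forall>i<e. u i \<in> E}"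
          by simp
        then have "P (\<Sum>i<e. (N ^^ i) (v i)) ((N ^^ (e - 1 - k)) y) = 0" by (rule h[rule_format])
        then have "0 = P (\<Sum>i<e. (N ^^ i) (v i)) ((N ^^ (e - 1 - k)) y)" by simp
        also have "\<dots> = (\<Sum>i<e. P ((N ^^ i) (v i)) ((N ^^ (e - 1 - k)) y))" by (rule Psum)
        also have "\<dots> = (\<Sum>i<e. if i = k then (-1) ^ k * P (v k) ((N ^^ (e - 1)) y) else 0)"
        proof (rule sum.cong)
          fix i assume "i \<in> {..<e}"
          then show "P ((N ^^ i) (v i)) ((N ^^ (e - 1 - k)) y) = (if i = k then (-1) ^ k * P (v k) ((N ^^ (e - 1)) y) else 0)"
          proof (cases "i < k")
            case True then show ?thesis using less.hyps[of i] k by simp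
          next
            case False
            show ?thesis
            proof (cases "i = k")
              case True
              have "k + (e - 1 - k) = e - 1" using k by simp
              then show ?thesis using True shift[of k "e - 1 - k" "v k" y] by simp
            next
              case False
              then have "e \<le> i + (e - 1 - k)" using \<open>\<not> i < k\<close> k by linarith
              then show ?thesis using vanish[of i "e - 1 - k" "v i" y] False by simp
            qed
          qed
        qed simp
        also have "\<dots> = (-1) ^ k * P (v k) ((N ^^ (e - 1)) y)" using k by simp
        finally show ?thesis by simp
      qed
      show "v k = 0" by (rule key) (use v k hk in auto)
    qed
  qed
  then show ?thesis by blast
qed

end

theorem mainTheorem9:
  fixes scale :: "'k::field \<Rightarrow> 'v::ab_group_add \<Rightarrow> 'v"
    and B :: "'v set" and Q :: "'v \<Rightarrow> 'k" and N :: "'v \<Rightarrow> 'v"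
    and e :: nat and E :: "'v set"
  assumes fd: "finite_dimensional_vector_space scale B"
    and qf: "quadratic_form scale Q"
    and nd: "nondegenerate Q"
    and NM: "N \<in> MQ scale Q"
    and N0: "N \<noteq> (\<lambda>_. 0)"
    and e_def: "e = (LEAST n. N ^^ n = (\<lambda>_. 0))"
    and E_sub: "module.subspace scale E"
    and E_int: "E \<inter> {x. (N ^^ (e - 1)) x = 0} = {0}"
    and E_sum: "\<forall>x. \<exists>u\<in>E. \<exists>k. (N ^^ (e - 1)) k = 0 \<and> x = u + k"
  shows "2 \<le> e \<and>
         inj_on (\<lambda>v. \<Sum>i<e. (N ^^ i) (v i)) {v. (\<forall>i<e. v i \<in> E) \<and> (\<forall>i\<ge>e. v i = 0)} \<and>
         (let W = {\<Sum>i<e. (N ^^ i) (v i) | v. \<forall>i<e. v i \<in> E}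
          in {w \<in> W. \<forall>w'\<in>W. polar Q w w' = 0} = {0})"
proof -
  interpret fdv: finite_dimensional_vector_space scale B by (rule fd)
  have linN: "Vector_Spaces.linear scale scale N" and nil: "\<exists>n. N ^^ n = (\<lambda>_. 0)"
    and Nq: "\<And>x. Q (N x) = - polar Q x (N x)"
    using NM unfolding MQ_def by auto
  have addN: "N (x + y) = N x + N y" for x y using linN unfolding Vector_Spaces.linear_iff by blast
  have addP: "\<And>x y z. polar Q (x + y) z = polar Q x z + polar Q y z"
  proof -
    fix x y z
    have "Vector_Spaces.linear scale (*) (\<lambda>x. polar Q x z)" using qf unfolding quadratic_form_def by blast
    then show "polar Q (x + y) z = polar Q x z + polar Q y z" unfolding Vector_Spaces.linear_iff by blast
  qed
  have Ne: "N ^^ e = (\<lambda>_. 0)" unfolding e_def using nil by (rule LeastI_ex)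
  have e0: "e \<noteq> 0"
  proof
    assume "e = 0"
    then have id0: "(\<lambda>x. x) = (\<lambda>_. (0::'v))" using Ne by (simp add: id_def)
    have "N = (\<lambda>_. 0)"
    proof (rule ext)
      fix x show "N x = 0" using fun_cong[OF id0, of "N x"] by simp
    qed
    then show False using N0 by simp
  qed
  have e1: "e \<noteq> 1"
  proof
    assume "e = 1"
    then show False using Ne N0 by simp
  qed
  have e2: "2 \<le> e" using e0 e1 by linarith
  interpret nq: nilq Q N e E
  proof
    show "0 \<in> E" using E_sub by (rule fdv.subspace_0)
  next
    fix x y assume "x \<in> E" "y \<in> E"
    then show "x - y \<in> E" using E_sub by (metis fdv.subspace_diff)
  next
    show "\<And>x y z. polar Q (x + y) z = polar Q x z + polar Q y z" by (rule addP)
  next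
    show "\<And>x y. N (x + y) = N x + N y" by (rule addN)
  next
    show "N ^^ e = (\<lambda>_. 0)" by (rule Ne)
  next
    show "2 \<le> e" by (rule e2)
  next
    show "\<And>x. Q (N x) = - polar Q x (N x)" by (rule Nq)
  next
    show "nondegenerate Q" by (rule nd)
  next
    show "E \<inter> {x. (N ^^ (e - 1)) x = 0} = {0}" by (rule E_int)
  next
    show "\<forall>x. \<exists>u\<in>E. \<exists>k. (N ^^ (e - 1)) k = 0 \<and> x = u + k" by (rule E_sum)
  qed
  have inj: "inj_on (\<lambda>v. \<Sum>i<e. (N ^^ i) (v i)) {v. (\<forall>i<e. v i \<in> E) \<and> (\<forall>i\<ge>e. v i = 0)}"
  proof (rule inj_onI)
    fix v v' assume v: "v \<in> {v. (\<forall>i<e. v i \<in> E) \<and> (\<forall>i\<ge>e. v i = 0)}"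
      and v': "v' \<in> {v. (\<forall>i<e. v i \<in> E) \<and> (\<forall>i\<ge>e. v i = 0)}"
      and eq: "(\<Sum>i<e. (N ^^ i) (v i)) = (\<Sum>i<e. (N ^^ i) (v' i))"
    have "(\<Sum>i<e. (N ^^ i) (v i - v' i)) = (\<Sum>i<e. (N ^^ i) (v i)) - (\<Sum>i<e. (N ^^ i) (v' i))"
      by (simp add: nq.pw_diff sum_subtractf)
    also have "\<dots> = 0" using eq by simp
    finally have s: "(\<Sum>i<e. (N ^^ i) (v i - v' i)) = 0" .
    have d: "\<forall>i<e. v i - v' i \<in> E" using v v' nq.Ediff by simp
    have "\<forall>i<e. v i - v' i = 0" by (rule nq.inj_core[OF d s])
    then show "v = v'"
    proof -
      assume z: "\<forall>i<e. v i - v' i = 0"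
      show "v = v'"
      proof (rule ext)
        fix i show "v i = v' i"
        proof (cases "i < e")
          case True then show ?thesis using z by simp
        next
          case False then show ?thesis using v v' by simp
        qed
      qed
    qed
  qed
  have rad: "{w \<in> {\<Sum>i<e. (N ^^ i) (v i) | v. \<forall>i<e. v i \<in> E}.
      \<forall>w'\<in>{\<Sum>i<e. (N ^^ i) (v i) | v. \<forall>i<e. v i \<in> E}. polar Q w w' = 0} = {0}"
  proof (intro equalityI subsetI)
    fix w assume w: "w \<in> {w \<in> {\<Sum>i<e. (N ^^ i) (v i) | v. \<forall>i<e. v i \<in> E}.
      \<forall>w'\<in>{\<Sum>i<e. (N ^^ i) (v i) | v. \<forall>i<e. v i \<in> E}. polar Q w w' = 0}"
    then obtain v where v: "\<forall>i<e. v i \<in> E" and wv: "w = (\<Sum>i<e. (N ^^ i) (v i))" by blast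
    have ww: "\<forall>w'\<in>{\<Sum>i<e. (N ^^ i) (v i) | v. \<forall>i<e. v i \<in> E}. polar Q w w' = 0"
      using CollectD[OF w] by (rule conjunct2)
    have "\<forall>i<e. v i = 0" by (rule nq.rad_core[OF v]) (use ww wv in simp)
    then show "w \<in> {0}" using wv by simp
  next
    fix w assume "w \<in> ({0} :: 'v set)"
    then have w0: "w = 0" by simp
    have "0 = (\<Sum>i<e. (N ^^ i) ((\<lambda>_. 0::'v) i))" by simp
    moreover have "\<forall>i<e. (\<lambda>_. 0::'v) i \<in> E" using nq.E0 by simp
    have "(0::'v) \<in> {\<Sum>i<e. (N ^^ i) (v i) | v. \<forall>i<e. v i \<in> E}"
      unfolding mem_Collect_eq by (rule exI[of _ "\<lambda>_. 0"]) (use nq.E0 in simp)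
    then show "w \<in> {w \<in> {\<Sum>i<e. (N ^^ i) (v i) | v. \<forall>i<e. v i \<in> E}.
      \<forall>w'\<in>{\<Sum>i<e. (N ^^ i) (v i) | v. \<forall>i<e. v i \<in> E}. polar Q w w' = 0}"
      using w0 by simp
  qed
  show ?thesis using e2 inj rad by (simp add: Let_def)
qed

end
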